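(* Consider a planar motion of oriented m-triangles in the $xy$-plane with normal vector $\mathbf k$ and angular momentum $\mathbf\Omega=\Omega\mathbf k$, and let $\omega_i=\dot\phi_i$ be the scalar angular velocity of the position vector $\mathbf a_i$ (where $\phi_i$ is its polar angle in the plane). Then, at nondegenerate configurations, $$\omega_i=\omega_i^0+\frac{\Omega}{I},\qquad i=1,2,3,$$ where (with indices mod $3$) $$\omega_1^0=\frac1I\big(I_3\dot\alpha_2-I_2\dot\alpha_3\big)=\frac{1}{8m_1m_2m_3\Delta I}\Big[(C_3I_3-C_2I_2)\frac{\dot I_1}{I_1}-(C_1+2m_2I_3)\dot I_2+(C_1+2m_3I_2)\dot I_3\Big],$$ and $\omega_2^0,\omega_3^0$ are obtained by cyclic permutation of the indices.
   Context: Masses $m_1,m_2,m_3>0$, $m_1+m_2+m_3=1$; position vectors $\mathbf a_i$ with $\sum m_i\mathbf a_i=0$ (center of mass at the origin $O$), vertices $P_i$ with $\mathbf a_i=\overrightarrow{OP_i}$. $I_i=m_i|\mathbf a_i|^2$, $I=I_1+I_2+I_3$. $\alpha_j$ is the central angle at $O$ opposite to the vertex $P_j$ (the angle between $\mathbf a_{j+1}$ and $\mathbf a_{j+2}$), so $\alpha_1+\alpha_2+\alpha_3=2\pi$. $\Delta$ is the area of the triangle $P_1P_2P_3$. $C_1=-m_1I_1+m_2I_2+m_3I_3$, and $C_2,C_3$ by cyclic permutation. The angular momentum is $\mathbf\Omega=\sum m_i\mathbf a_i\times\dot{\mathbf a}_i$. *)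

theory Defs
  imports "HOL-Analysis.Analysis"
begin

text \<open>Planar vectors are elements of real^2; the vertices are indexed by 1,2,3
  (indices taken mod 3 via nx).\<close>

definition nx :: "nat \<Rightarrow> nat" where
  "nx i = i mod 3 + 1"

definition cross2 :: "real^2 \<Rightarrow> real^2 \<Rightarrow> real" where
  "cross2 u v = u$1 * v$2 - u$2 * v$1"

definition vang :: "real^2 \<Rightarrow> real^2 \<Rightarrow> real" where
  "vang u v = arccos ((u \<bullet> v) / (norm u * norm v))"

definition mI :: "(nat \<Rightarrow> real) \<Rightarrow> (nat \<Rightarrow> real \<Rightarrow> real^2) \<Rightarrow> nat \<Rightarrow> real \<Rightarrow> real" where
  "mI m a i t = m i * (norm (a i t))\<^sup>2"

definition totI :: "(nat \<Rightarrow> real) \<Rightarrow> (nat \<Rightarrow> real \<Rightarrow> real^2) \<Rightarrow> real \<Rightarrow> real" where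
  "totI m a t = mI m a 1 t + mI m a 2 t + mI m a 3 t"

text \<open>central angle at O opposite to vertex j: angle between a_(j+1) and a_(j+2)\<close>
definition alpha :: "(nat \<Rightarrow> real \<Rightarrow> real^2) \<Rightarrow> nat \<Rightarrow> real \<Rightarrow> real" where
  "alpha a j t = vang (a (nx j) t) (a (nx (nx j)) t)"

text \<open>signed area of the triangle P1 P2 P3 (positive iff counterclockwise)\<close>
definition sarea :: "(nat \<Rightarrow> real \<Rightarrow> real^2) \<Rightarrow> real \<Rightarrow> real" where
  "sarea a t = cross2 (a 2 t - a 1 t) (a 3 t - a 1 t) / 2"

definition Cc :: "(nat \<Rightarrow> real) \<Rightarrow> (nat \<Rightarrow> real \<Rightarrow> real^2) \<Rightarrow> nat \<Rightarrow> real \<Rightarrow> real" where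
  "Cc m a i t = - m i * mI m a i t + m (nx i) * mI m a (nx i) t
               + m (nx (nx i)) * mI m a (nx (nx i)) t"

definition angmom :: "(nat \<Rightarrow> real) \<Rightarrow> (nat \<Rightarrow> real \<Rightarrow> real^2) \<Rightarrow> real \<Rightarrow> real" where
  "angmom m a t = (\<Sum>i\<in>{1,2,3}. m i * cross2 (a i t) (vector_derivative (a i) (at t)))"

end

theory Submission
  imports Defs
begin

lemma comp_deriv:
  fixes A :: "real \<Rightarrow> real^2"
  assumes "(A has_vector_derivative V) (at t)"
  shows "((\<lambda>s. A s $ k) has_real_derivative V $ k) (at t)"
proof -
  have "((\<lambda>s. A s $ k) has_derivative (\<lambda>x. (x *\<^sub>R V) $ k)) (at t)"
    using bounded_linear.has_derivative[OF bounded_linear_vec_nth assms[unfolded has_vector_derivative_def]] .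
  moreover have "(\<lambda>x. (x *\<^sub>R V) $ k) = (*) (V $ k)" by (auto simp: fun_eq_iff)
  ultimately show ?thesis unfolding has_field_derivative_def by simp
qed

lemma norm2: "norm (z::real^2) = sqrt (z$1^2 + z$2^2)"
  by (simp add: norm_eq_sqrt_inner inner_vec_def sum_2 power2_eq_square)

lemma norm2sq: "(norm (z::real^2))^2 = z$1^2 + z$2^2"
  unfolding norm2 by (simp add: add_nonneg_nonneg)

lemma ev_nonzero:
  fixes A :: "real \<Rightarrow> real^2"
  assumes "(A has_vector_derivative V) (at t)" "A t \<noteq> 0"
  shows "eventually (\<lambda>s. A s \<noteq> 0) (nhds t)"
proof -
  have "isCont A t" using has_vector_derivative_continuous[OF assms(1)] .
  then have "(A \<longlongrightarrow> A t) (nhds t)" using tendsto_at_iff_tendsto_nhds continuous_at by blast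
  then show ?thesis using tendsto_imp_eventually_ne assms(2) by blast
qed

lemma phi_deriv:
  fixes A :: "real \<Rightarrow> real^2" and ph :: "real \<Rightarrow> real"
  assumes dA: "(A has_vector_derivative V) (at t)"
    and pol: "\<forall>s. A s $ 1 = norm (A s) * cos (ph s) \<and> A s $ 2 = norm (A s) * sin (ph s)"
    and cph: "isCont ph t" and nz: "A t \<noteq> 0"
  shows "(ph has_real_derivative (A t $ 1 * V $ 2 - A t $ 2 * V $ 1) / (norm (A t))^2) (at t)"
proof -
  define X where "X = (\<lambda>s. A s $ 1)"
  define Y where "Y = (\<lambda>s. A s $ 2)"
  have dX: "(X has_real_derivative V $ 1) (at t)" unfolding X_def by (rule comp_deriv[OF dA])
  have dY: "(Y has_real_derivative V $ 2) (at t)" unfolding Y_def by (rule comp_deriv[OF dA])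
  define R where "R = norm (A t)"
  have Rp: "R > 0" using nz unfolding R_def by simp
  define c where "c = cos (ph t)"
  define sn where "sn = sin (ph t)"
  have Xt: "X t = R * c" and Yt: "Y t = R * sn" using pol unfolding X_def Y_def R_def c_def sn_def by auto
  have nR: "sqrt (X s ^2 + Y s ^2) = norm (A s)" for s unfolding X_def Y_def norm2 ..
  define g where "g = (\<lambda>s. (c * Y s - sn * X s) / sqrt (X s ^2 + Y s ^2))"
  have ev1: "eventually (\<lambda>s. A s \<noteq> 0) (nhds t)" by (rule ev_nonzero[OF dA nz])
  have "(ph \<longlongrightarrow> ph t) (nhds t)" using cph tendsto_at_iff_tendsto_nhds continuous_at by blast
  then have ev2: "eventually (\<lambda>s. dist (ph s) (ph t) < pi/2) (nhds t)"
    by (rule tendstoD) simp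
  have ev: "eventually (\<lambda>s. ph t + arcsin (g s) = ph s) (nhds t)"
    using ev1 ev2
  proof eventually_elim
    case (elim s)
    have np: "norm (A s) > 0" using elim by simp
    have "g s = sin (ph s - ph t)"
      unfolding g_def nR using pol np unfolding X_def Y_def c_def sn_def sin_diff
      by (simp add: field_simps)
    moreover have "- (pi/2) \<le> ph s - ph t" "ph s - ph t \<le> pi/2"
      using elim(2) unfolding dist_real_def by linarith+
    ultimately show ?case using arcsin_sin by simp
  qed
  have gt: "g t = 0" unfolding g_def Xt Yt by simp
  have sq: "sqrt (X t ^2 + Y t ^2) = R" unfolding nR R_def ..
  have dg: "(g has_real_derivative (c * V$2 - sn * V$1) / R) (at t)"
  proof -
    have "(g has_real_derivative
       ((c * V$2 - sn * V$1) * sqrt (X t ^2 + Y t ^2) - (c * Y t - sn * X t) *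
         (inverse (sqrt (X t ^2 + Y t ^2)) / 2 * (2 * X t * V$1 + 2 * Y t * V$2)))
       / (sqrt (X t ^2 + Y t ^2) * sqrt (X t ^2 + Y t ^2))) (at t)"
      unfolding g_def
    proof (rule DERIV_divide)
      show "((\<lambda>s. c * Y s - sn * X s) has_real_derivative c * V$2 - sn * V$1) (at t)"
        by (intro derivative_intros DERIV_cmult dX dY)
      have d2: "((\<lambda>s. X s^2 + Y s^2) has_real_derivative 2 * X t * V$1 + 2 * Y t * V$2) (at t)"
        using dX dY by (auto intro!: derivative_eq_intros)
      have p: "X t ^2 + Y t ^2 > 0" using sq Rp by (metis real_sqrt_gt_0_iff)
      show "((\<lambda>s. sqrt (X s ^2 + Y s ^2)) has_real_derivative
         inverse (sqrt (X t ^2 + Y t ^2)) / 2 * (2 * X t * V$1 + 2 * Y t * V$2)) (at t)"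
        by (rule DERIV_chain2[OF DERIV_real_sqrt[OF p] d2])
      show "sqrt (X t ^2 + Y t ^2) \<noteq> 0" using sq Rp by simp
    qed
    moreover have "c * Y t - sn * X t = 0" unfolding Xt Yt by simp
    moreover have "(R * (c * V $ 2) - R * (sn * V $ 1)) / (R * R) = (c * V$2 - sn * V$1) / R"
      using Rp by (simp add: field_simps)
    ultimately show ?thesis unfolding sq using Rp by simp
  qed
  have "((\<lambda>s. ph t + arcsin (g s)) has_real_derivative 0 + inverse (sqrt (1 - (g t)\<^sup>2)) * ((c * V$2 - sn * V$1) / R)) (at t)"
    by (intro derivative_intros DERIV_arcsin[THEN DERIV_chain2] dg) (auto simp: gt)
  then have "((\<lambda>s. ph t + arcsin (g s)) has_real_derivative (c * V$2 - sn * V$1) / R) (at t)"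
    by (simp add: gt)
  then have "(ph has_real_derivative (c * V$2 - sn * V$1) / R) (at t)"
    using DERIV_cong_ev[OF refl ev refl] by simp
  moreover have "(c * V$2 - sn * V$1) / R = (A t $ 1 * V $ 2 - A t $ 2 * V $ 1) / (norm (A t))^2"
    using Xt Yt Rp unfolding X_def Y_def R_def[symmetric] by (simp add: field_simps power2_eq_square)
  ultimately show ?thesis by simp
qed
lemma alpha_deriv:
  fixes A B :: "real \<Rightarrow> real^2" and pa pb :: "real \<Rightarrow> real"
  assumes polA: "\<forall>s. A s $ 1 = norm (A s) * cos (pa s) \<and> A s $ 2 = norm (A s) * sin (pa s)"
    and polB: "\<forall>s. B s $ 1 = norm (B s) * cos (pb s) \<and> B s $ 2 = norm (B s) * sin (pb s)"
    and da: "(pa has_real_derivative wa) (at t)" and db: "(pb has_real_derivative wb) (at t)"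
    and ev: "eventually (\<lambda>s. A s \<noteq> 0 \<and> B s \<noteq> 0) (nhds t)"
    and cr: "cross2 (B t) (A t) > 0"
  shows "((\<lambda>s. vang (B s) (A s)) has_real_derivative (wa - wb)) (at t)"
proof -
  define psi where "psi = (\<lambda>s. pa s - pb s)"
  have dpsi: "(psi has_real_derivative wa - wb) (at t)" unfolding psi_def by (intro derivative_intros da db)
  have inn: "B s \<bullet> A s = norm (B s) * norm (A s) * cos (psi s)" for s
    using polA polB unfolding psi_def cos_diff
    by (simp add: inner_vec_def sum_2) (simp add: algebra_simps)
  have crs: "cross2 (B s) (A s) = norm (B s) * norm (A s) * sin (psi s)" for s
    using polA polB unfolding psi_def sin_diff cross2_def
    by simp (simp add: algebra_simps)
  have nzt: "norm (B t) * norm (A t) > 0" using cr unfolding cross2_def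
    by (smt (verit, ccfv_threshold) mult_eq_0_iff norm_eq_zero polA polB zero_less_mult_iff norm_ge_zero)
  have sp: "sin (psi t) > 0" using cr nzt unfolding crs by (simp add: zero_less_mult_iff)
  have evq: "eventually (\<lambda>s. arccos (cos (psi s)) = vang (B s) (A s)) (nhds t)"
    using ev by eventually_elim (simp add: vang_def inn)
  have c2: "(cos (psi t))^2 < 1" using sp sin_cos_squared_add[of "psi t"]
    by (smt (verit) zero_less_power)
  have cb: "-1 < cos (psi t)" "cos (psi t) < 1" using c2 by (auto simp: abs_square_less_1 abs_less_iff)
  have sq: "sqrt (1 - (cos (psi t))^2) = sin (psi t)"
    using sin_cos_squared_add[of "psi t"] sp by (simp add: algebra_simps real_sqrt_unique)
  have "((\<lambda>s. arccos (cos (psi s))) has_real_derivative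
          inverse (- sqrt (1 - (cos (psi t))^2)) * (- sin (psi t) * (wa - wb))) (at t)"
    by (intro DERIV_arccos[THEN DERIV_chain2] cb DERIV_cos[THEN DERIV_chain2] dpsi)
  note dd = this
  have "((\<lambda>s. arccos (cos (psi s))) has_real_derivative wa - wb) (at t)"
  proof -
    have e: "inverse (- sin (psi t)) * (- sin (psi t) * (wa - wb)) = wa - wb" using sp
      by (simp add: field_simps)
    show ?thesis using dd unfolding sq e .
  qed
  then show ?thesis using DERIV_cong_ev[OF refl evq refl] by simp
qed
lemma polyid:
  fixes m1 m2 m3 x1 y1 x2 y2 u1 v1 u2 v2 :: real
  shows "let X3=-(m1*x1+m2*x2);Y3=-(m1*y1+m2*y2);U3=-(m1*u1+m2*u2);V3=-(m1* v1+m2* v2);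
  r1=x1*x1+y1*y1;r2=x2*x2+y2*y2;I1=m1*r1;I2=m2*r2;
  q1=x1* v1-y1*u1;q2=x2* v2-y2*u2;p1=x1*u1+y1* v1;p2=x2*u2+y2* v2;
  S3=X3^2+Y3^2;Q3=X3*V3-Y3*U3;P3=X3*U3+Y3*V3;c12=x1*y2-y1*x2;
  C1= -m1*I1+m2*I2+S3;C2=m1*I1-m2*I2+S3;C3=m1*I1+m2*I2-S3
  in 4*m1*m2*c12*((S3+m3*I2)*q1-r1*(Q3+m3*m2*q2)) =
    (C3*S3-m3*C2*I2)*2*p1-r1*(m3*C1+2*m2*S3)*2*m2*p2+r1*(C1+2*m3*I2)*2*P3"
  unfolding Let_def by algebra

lemma alg:
  fixes m1 m2 m3 x1 y1 x2 y2 x3 y3 u1 v1 u2 v2 u3 v3 :: real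
  assumes mp: "m1>0" "m2>0" "m3>0" and ms: "m1+m2+m3=1"
   and cx: "m1*x1+m2*x2+m3*x3=0" and cy: "m1*y1+m2*y2+m3*y3=0"
   and cu: "m1*u1+m2*u2+m3*u3=0" and cv: "m1* v1+m2* v2+m3* v3=0"
   and rp: "x1^2+y1^2>0" "x2^2+y2^2>0" "x3^2+y3^2>0"
   and Dp: "(x2-x1)*(y3-y1)-(y2-y1)*(x3-x1) \<noteq> 0"
  shows "let r1=x1^2+y1^2; r2=x2^2+y2^2; r3=x3^2+y3^2; I1=m1*r1; I2=m2*r2; I3=m3*r3;
     dI1=2*m1*(x1*u1+y1* v1); dI2=2*m2*(x2*u2+y2* v2); dI3=2*m3*(x3*u3+y3* v3);
     w1=(x1* v1-y1*u1)/r1; w2=(x2* v2-y2*u2)/r2; w3=(x3* v3-y3*u3)/r3; T=I1+I2+I3;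
     C1= -m1*I1+m2*I2+m3*I3; C2= -m2*I2+m3*I3+m1*I1; C3= -m3*I3+m1*I1+m2*I2;
     D=((x2-x1)*(y3-y1)-(y2-y1)*(x3-x1))/2
   in (I3*(w1-w3) - I2*(w2-w1))/T = ((C3*I3-C2*I2)*dI1/I1 - (C1+2*m2*I3)*dI2 + (C1+2*m3*I2)*dI3)/(8*m1*m2*m3*D*T)"
proof -
  have x3: "x3 = -(m1*x1+m2*x2)/m3" using cx mp by (simp add: field_simps)
  have y3: "y3 = -(m1*y1+m2*y2)/m3" using cy mp by (simp add: field_simps)
  have u3: "u3 = -(m1*u1+m2*u2)/m3" using cu mp by (simp add: field_simps)
  have v3: "v3 = -(m1* v1+m2* v2)/m3" using cv mp by (simp add: field_simps)
  have D: "(x2-x1)*(y3-y1)-(y2-y1)*(x3-x1) = (x1*y2-y1*x2)/m3"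
    unfolding x3 y3 using mp ms by (simp add: field_simps) algebra
  have c12: "x1*y2-y1*x2 \<noteq> 0" using Dp D by auto
  have ex: "m1*x1+m2*x2 = -(m3*x3)" "m1*y1+m2*y2 = -(m3*y3)" using cx cy by linarith+
  have r3e: "(-(m3*x3))^2+(-(m3*y3))^2 = m3^2*(x3^2+y3^2)"
    by (simp only: power2_minus power_mult_distrib distrib_left)
  have r3: "(m1*x1+m2*x2)^2+(m1*y1+m2*y2)^2 > 0" unfolding ex r3e using rp(3) mp by simp
  have ex2: "-(m1*x1+m2*x2) = m3*x3" "-(m1*y1+m2*y2) = m3*y3" "-(m1*u1+m2*u2) = m3*u3" "-(m1* v1+m2* v2) = m3* v3"
    using cx cy cu cv by linarith+
  note P = polyid[of m1 x1 m2 x2 y1 y2 u1 u2 v1 v2 m3, unfolded Let_def ex2]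
  define r1 where "r1 = x1^2+y1^2"
  define r2 where "r2 = x2^2+y2^2"
  define r3 where "r3 = x3^2+y3^2"
  define q1 where "q1 = x1* v1-y1*u1"
  define q2 where "q2 = x2* v2-y2*u2"
  define q3 where "q3 = x3* v3-y3*u3"
  define p1 where "p1 = x1*u1+y1* v1"
  define p2 where "p2 = x2*u2+y2* v2"
  define p3 where "p3 = x3*u3+y3* v3"
  define c12 where "c12 = x1*y2-y1*x2"
  define I1 where "I1 = m1*r1"
  define I2 where "I2 = m2*r2"
  define I3 where "I3 = m3*r3"
  define C1 where "C1 = -m1*I1+m2*I2+m3*I3"
  define C2 where "C2 = -m2*I2+m3*I3+m1*I1"
  define C3 where "C3 = -m3*I3+m1*I1+m2*I2"
  have star0: "m3 * (4*m1*m2*c12*((I3+I2)*q1 - r1*(m3*q3+m2*q2))) = 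
     m3 * ((C3*I3 - C2*I2)*2*p1 - r1*(C1+2*m2*I3)*2*m2*p2 + r1*(C1+2*m3*I2)*2*m3*p3)"
    using P unfolding r1_def r2_def r3_def q1_def q2_def q3_def p1_def p2_def p3_def c12_def I1_def I2_def I3_def
      C1_def C2_def C3_def by algebra
  have star: "4*m1*m2*c12*((I3+I2)*q1 - r1*(m3*q3+m2*q2)) = 
     (C3*I3 - C2*I2)*2*p1 - r1*(C1+2*m2*I3)*2*m2*p2 + r1*(C1+2*m3*I2)*2*m3*p3"
    using star0 mp by simp
  have r1p: "r1 > 0" "r2 > 0" "r3 > 0" using rp unfolding r1_def r2_def r3_def by auto
  have Tp: "I1+I2+I3 > 0" unfolding I1_def I2_def I3_def using r1p mp by (intro add_pos_pos mult_pos_pos) auto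
  have Dv: "((x2-x1)*(y3-y1)-(y2-y1)*(x3-x1))/2 = c12/(2*m3)" unfolding D c12_def by simp
  have c12n: "c12 \<noteq> 0" using c12 unfolding c12_def .
  have goal: "(I3*(q1/r1-q3/r3) - I2*(q2/r2-q1/r1))/(I1+I2+I3) = ((C3*I3-C2*I2)*(2*m1*p1)/I1 - (C1+2*m2*I3)*(2*m2*p2) + (C1+2*m3*I2)*(2*m3*p3))/(8*m1*m2*m3*(c12/(2*m3))*(I1+I2+I3))"
  proof -
    have e1: "I3*(q1/r1-q3/r3) - I2*(q2/r2-q1/r1) = ((I3+I2)*q1 - r1*(m3*q3+m2*q2))/r1"
      using r1p unfolding I3_def I2_def by (simp add: field_simps)
    have e2: "(C3*I3-C2*I2)*(2*m1*p1)/I1 - (C1+2*m2*I3)*(2*m2*p2) + (C1+2*m3*I2)*(2*m3*p3)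
       = (4*m1*m2*c12)*(((I3+I2)*q1 - r1*(m3*q3+m2*q2))/r1)"
    proof -
      have "(C3*I3-C2*I2)*(2*m1*p1)/I1 - (C1+2*m2*I3)*(2*m2*p2) + (C1+2*m3*I2)*(2*m3*p3)
        = ((C3*I3 - C2*I2)*2*p1 - r1*(C1+2*m2*I3)*2*m2*p2 + r1*(C1+2*m3*I2)*2*m3*p3)/r1"
        using r1p mp unfolding I1_def by (simp add: field_simps)
      also have "\<dots> = (4*m1*m2*c12*((I3+I2)*q1 - r1*(m3*q3+m2*q2)))/r1" unfolding star ..
      finally show ?thesis by simp
    qed
    have K: "8*m1*m2*m3*(c12/(2*m3)) = 4*m1*m2*c12" using mp by simp
    have Kn: "4*m1*m2*c12 \<noteq> 0" using mp c12n by simp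
    show ?thesis unfolding e1 e2 K by (rule mult_divide_mult_cancel_left[OF Kn, symmetric])
  qed
  show ?thesis unfolding Let_def using goal
    unfolding r1_def r2_def r3_def q1_def q2_def q3_def p1_def p2_def p3_def c12_def I1_def I2_def I3_def
      C1_def C2_def C3_def Dv[unfolded c12_def] by (simp add: mult.assoc)
qed

lemma crossid:
  fixes m1 m2 m3 x1 x2 x3 y1 y2 y3 :: real
  assumes "m1*x1+m2*x2+m3*x3=0" "m1*y1+m2*y2+m3*y3=0" "m1+m2+m3=1"
  shows "x1*y2 - y1*x2 = m3*((x2-x1)*(y3-y1)-(y2-y1)*(x3-x1))"
  using assms by algebra

lemma nx_simps[simp]: "nx 1 = 2" "nx (Suc 0) = 2" "nx 2 = 3" "nx 3 = 1" by (simp_all add: nx_def)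

lemma nx_in[simp]: "nx l \<in> {1,2,3}" unfolding nx_def by auto

lemma nx3: "i \<in> {1,2,3} \<Longrightarrow> nx (nx (nx i)) = i" by auto

lemma cyc_sum: "i \<in> {1,2,3} \<Longrightarrow> (f i::real) + f (nx i) + f (nx (nx i)) = f 1 + f 2 + f 3" by auto

lemma cyc_prod: "i \<in> {1,2,3} \<Longrightarrow> (f i::real) * f (nx i) * f (nx (nx i)) = f 1 * f 2 * f 3" by auto

lemma cyc_S: "i \<in> {1,2,3} \<Longrightarrow>
  (x (nx i) - x i)*(y (nx (nx i)) - y i) - (y (nx i) - y i)*(x (nx (nx i)) - x i)
  = (x 2 - x 1)*(y 3 - y 1) - (y 2 - y 1)*(x 3 - x (1::nat)::real)"
  by (auto simp: algebra_simps)

lemma core: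
  fixes m x y u v w :: "nat \<Rightarrow> real" and i j k :: nat and daj dak Om T S :: real
  assumes mp: "m i > 0" "m j > 0" "m k > 0" and ms: "m i + m j + m k = 1"
    and cx: "m i*x i + m j*x j + m k*x k = 0" and cy: "m i*y i + m j*y j + m k*y k = 0"
    and cu: "m i*u i + m j*u j + m k*u k = 0" and cv: "m i* v i + m j* v j + m k* v k = 0"
    and rp: "x i^2+y i^2 > 0" "x j^2 + y j^2 > 0" "x k^2+y k^2>0"
    and S: "S = ((x j - x i)*(y k - y i) - (y j - y i)*(x k - x i))/2" and Sn: "S \<noteq> 0"
    and w: "w i = (x i* v i - y i*u i)/(x i^2+y i^2)" "w j = (x j* v j - y j*u j)/(x j^2+y j^2)"
           "w k = (x k* v k - y k*u k)/(x k^2+y k^2)"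
    and daj: "daj = w i - w k" and dak: "dak = w j - w i"
    and T: "T = m i*(x i^2+y i^2) + m j*(x j^2+y j^2) + m k*(x k^2+y k^2)"
    and Om: "Om = m i*(x i* v i - y i*u i) + m j*(x j* v j - y j*u j) + m k*(x k* v k - y k*u k)"
  shows "w i = (m k*(x k^2+y k^2)*daj - m j*(x j^2+y j^2)*dak)/T + Om/T"
    and "(m k*(x k^2+y k^2)*daj - m j*(x j^2+y j^2)*dak)/T =
      (((- m k*(m k*(x k^2+y k^2)) + m i*(m i*(x i^2+y i^2)) + m j*(m j*(x j^2+y j^2)))*(m k*(x k^2+y k^2))
       - (- m j*(m j*(x j^2+y j^2)) + m k*(m k*(x k^2+y k^2)) + m i*(m i*(x i^2+y i^2)))*(m j*(x j^2+y j^2)))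
        * (2*m i*(x i*u i+y i* v i)) / (m i*(x i^2+y i^2))
       - ((- m i*(m i*(x i^2+y i^2)) + m j*(m j*(x j^2+y j^2)) + m k*(m k*(x k^2+y k^2))) + 2*m j*(m k*(x k^2+y k^2))) * (2*m j*(x j*u j+y j* v j))
       + ((- m i*(m i*(x i^2+y i^2)) + m j*(m j*(x j^2+y j^2)) + m k*(m k*(x k^2+y k^2))) + 2*m k*(m j*(x j^2+y j^2))) * (2*m k*(x k*u k+y k* v k)))
      / (8*m i*m j*m k*S*T)" (is "?LL = ?RR")
proof -
  have Tp: "T > 0" unfolding T using mult_pos_pos[OF mp(1) rp(1)] mult_pos_pos[OF mp(2) rp(2)]
    mult_pos_pos[OF mp(3) rp(3)] by linarith
  have q: "m l*(x l* v l - y l*u l) = m l*(x l^2+y l^2) * w l" if "x l^2+y l^2 > 0" "w l = (x l* v l - y l*u l)/(x l^2+y l^2)" for l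
    using that by simp
  show "w i = (m k*(x k^2+y k^2)*daj - m j*(x j^2+y j^2)*dak)/T + Om/T"
  proof -
    have "m k*(x k^2+y k^2)*daj - m j*(x j^2+y j^2)*dak + Om = w i * T"
      unfolding Om q[OF rp(1) w(1)] q[OF rp(2) w(2)] q[OF rp(3) w(3)] daj dak T
      by (simp add: algebra_simps)
    then show ?thesis using Tp by (simp add: add_divide_distrib[symmetric])
  qed
  have Dp: "(x j - x i)*(y k - y i) - (y j - y i)*(x k - x i) \<noteq> 0" using Sn S by simp
  note A = alg[OF mp ms cx cy cu cv rp Dp, unfolded Let_def]
  show "?LL = ?RR"
    unfolding daj dak w T S by (rule A)
qed

theorem theoremC1:
  fixes m :: "nat \<Rightarrow> real" and a :: "nat \<Rightarrow> real \<Rightarrow> real^2"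
    and phi :: "nat \<Rightarrow> real \<Rightarrow> real" and t :: real
  assumes mpos: "\<forall>i\<in>{1,2,3}. m i > 0"
    and msum: "m 1 + m 2 + m 3 = 1"
    and com: "\<forall>s. m 1 *\<^sub>R a 1 s + m 2 *\<^sub>R a 2 s + m 3 *\<^sub>R a 3 s = 0"
    and smooth: "\<forall>i\<in>{1,2,3}. \<forall>s. a i differentiable (at s)"
    and polar: "\<forall>i\<in>{1,2,3}. \<forall>s. a i s $ 1 = norm (a i s) * cos (phi i s)
                                   \<and> a i s $ 2 = norm (a i s) * sin (phi i s)"
    and phicont: "\<forall>i\<in>{1,2,3}. isCont (phi i) t"
    and nondeg: "sarea a t > 0"
  shows "\<forall>i\<in>{1,2,3}.
     (let j = nx i; k = nx (nx i); I = totI m a t; \<Omega> = angmom m a t;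
          Ii = mI m a i t; Ij = mI m a j t; Ik = mI m a k t;
          dIi = deriv (mI m a i) t; dIj = deriv (mI m a j) t; dIk = deriv (mI m a k) t;
          Ci = Cc m a i t; Cj = Cc m a j t; Ck = Cc m a k t;
          w0 = (Ik * deriv (alpha a j) t - Ij * deriv (alpha a k) t) / I
      in deriv (phi i) t = w0 + \<Omega> / I
       \<and> w0 = ((Ck * Ik - Cj * Ij) * dIi / Ii - (Ci + 2 * m j * Ik) * dIj
               + (Ci + 2 * m k * Ij) * dIk)
              / (8 * m 1 * m 2 * m 3 * sarea a t * I))"
  proof -
  define V where "V = (\<lambda>l. vector_derivative (a l) (at t))"
  define x where "x = (\<lambda>l. a l t $ 1)"
  define y where "y = (\<lambda>l. a l t $ 2)"
  define u where "u = (\<lambda>l. V l $ 1)"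
  define v where "v = (\<lambda>l. V l $ 2)"
  define w where "w = (\<lambda>l. (x l* v l - y l*u l)/(x l^2+y l^2))"
  have dV: "(a l has_vector_derivative V l) (at t)" if "l \<in> {1,2,3}" for l
    using smooth that vector_derivative_works unfolding V_def by blast
  have cx: "m 1*x 1 + m 2*x 2 + m 3*x 3 = 0" and cy: "m 1*y 1 + m 2*y 2 + m 3*y 3 = 0"
    using arg_cong[OF com[rule_format, of t], of "\<lambda>z. z $ 1"]
      arg_cong[OF com[rule_format, of t], of "\<lambda>z. z $ 2"] unfolding x_def y_def by simp_all
  have cuv: "m 1*V 1 $ c + m 2*V 2 $ c + m 3*V 3 $ c = 0" for c
  proof -
    have "((\<lambda>s. m 1 * a 1 s $ c + m 2 * a 2 s $ c + m 3 * a 3 s $ c) has_real_derivative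
       m 1*V 1 $ c + m 2*V 2 $ c + m 3*V 3 $ c) (at t)"
      by (intro DERIV_add DERIV_cmult comp_deriv dV) auto
    moreover have "(\<lambda>s. m 1 * a 1 s $ c + m 2 * a 2 s $ c + m 3 * a 3 s $ c) = (\<lambda>s. 0)"
    proof
      fix s
      have "(m 1 *\<^sub>R a 1 s + m 2 *\<^sub>R a 2 s + m 3 *\<^sub>R a 3 s) $ c = 0" using com by simp
      then show "m 1 * a 1 s $ c + m 2 * a 2 s $ c + m 3 * a 3 s $ c = 0" by simp
    qed
    ultimately show ?thesis using DERIV_unique DERIV_const by metis
  qed
  have cu: "m 1*u 1 + m 2*u 2 + m 3*u 3 = 0" and cv: "m 1* v 1 + m 2* v 2 + m 3* v 3 = 0"
    using cuv[of 1] cuv[of 2] unfolding u_def v_def by auto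
  define S where "S = ((x 2 - x 1)*(y 3 - y 1) - (y 2 - y 1)*(x 3 - x 1))/2"
  have SA: "sarea a t = S" unfolding sarea_def cross2_def S_def x_def y_def by simp
  have Sp: "S > 0" using nondeg SA by simp
  have cross: "cross2 (a l t) (a (nx l) t) = 2 * m (nx (nx l)) * S" if l: "l \<in> {1,2,3}" for l
  proof -
    have "x l * y (nx l) - y l * x (nx l) = m (nx (nx l)) *
      ((x (nx l) - x l)*(y (nx (nx l)) - y l) - (y (nx l) - y l)*(x (nx (nx l)) - x l))"
      by (rule crossid) (use cyc_sum[OF l, of "\<lambda>l. m l * x l"] cyc_sum[OF l, of "\<lambda>l. m l * y l"]
          cyc_sum[OF l, of m] cx cy msum in auto)
    also have "\<dots> = 2 * m (nx (nx l)) * S" unfolding S_def cyc_S[OF l, of x y] by simp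
    finally show ?thesis unfolding cross2_def x_def y_def by simp
  qed
  have crossp: "cross2 (a l t) (a (nx l) t) > 0" if l: "l \<in> {1,2,3}" for l
    unfolding cross[OF l] using mpos Sp nx_in[of "nx l"] by (intro mult_pos_pos) auto
  have nz: "a l t \<noteq> 0" if l: "l \<in> {1,2,3}" for l
    using crossp[OF l] unfolding cross2_def by auto
  have rp: "x l^2 + y l^2 > 0" if l: "l \<in> {1,2,3}" for l
  proof -
    have "(norm (a l t))^2 > 0" using nz[OF l] by simp
    then show ?thesis using norm2sq[of "a l t"] unfolding x_def y_def by simp
  qed
  have dphi: "(phi l has_real_derivative w l) (at t)" if l: "l \<in> {1,2,3}" for l
    using phi_deriv[OF dV[OF l] bspec[OF polar l] phicont[rule_format, OF l] nz[OF l]]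
    unfolding w_def x_def y_def u_def v_def norm2sq by simp
  have Dphi: "deriv (phi l) t = w l" if l: "l \<in> {1,2,3}" for l
    using DERIV_imp_deriv[OF dphi[OF l]] .
  have Dalpha: "deriv (alpha a l) t = w (nx (nx l)) - w (nx l)" if l: "l \<in> {1,2,3}" for l
  proof -
    have m1: "nx l \<in> {1,2,3}" "nx (nx l) \<in> {1,2,3}" by (rule nx_in)+
    have "alpha a l = (\<lambda>s. vang (a (nx l) s) (a (nx (nx l)) s))" unfolding alpha_def by auto
    moreover have "((\<lambda>s. vang (a (nx l) s) (a (nx (nx l)) s)) has_real_derivative w (nx (nx l)) - w (nx l)) (at t)"
      using alpha_deriv[OF bspec[OF polar m1(2)] bspec[OF polar m1(1)] dphi[OF m1(2)] dphi[OF m1(1)]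
        eventually_conj[OF ev_nonzero[OF dV[OF m1(2)] nz[OF m1(2)]] ev_nonzero[OF dV[OF m1(1)] nz[OF m1(1)]]]
        crossp[OF m1(1)]] .
    ultimately show ?thesis using DERIV_imp_deriv by metis
  qed
  have mIf: "mI m a l = (\<lambda>s. m l * (a l s $ 1 ^2 + a l s $ 2 ^2))" for l
    unfolding mI_def[abs_def] norm2sq by simp
  have mIt: "mI m a l t = m l * (x l^2 + y l^2)" for l unfolding mIf x_def y_def by simp
  have DmI: "deriv (mI m a l) t = 2 * m l * (x l * u l + y l * v l)" if l: "l \<in> {1,2,3}" for l
  proof -
    have "((\<lambda>s. m l * (a l s $ 1 ^2 + a l s $ 2 ^2)) has_real_derivative
       m l * (2 * x l * u l + 2 * y l * v l)) (at t)"
      using comp_deriv[OF dV[OF l], of 1] comp_deriv[OF dV[OF l], of 2]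
      unfolding x_def y_def u_def v_def by (auto intro!: derivative_eq_intros)
    then show ?thesis unfolding mIf by (simp add: DERIV_imp_deriv algebra_simps)
  qed
  have TI: "totI m a t = m 1*(x 1^2+y 1^2) + m 2*(x 2^2+y 2^2) + m 3*(x 3^2+y 3^2)"
    unfolding totI_def mIt ..
  have OmI: "angmom m a t = m 1*(x 1* v 1 - y 1*u 1) + m 2*(x 2* v 2 - y 2*u 2) + m 3*(x 3* v 3 - y 3*u 3)"
    unfolding angmom_def cross2_def x_def y_def u_def v_def V_def by (simp add: add.assoc)
  show ?thesis
  proof
    fix i :: nat assume i: "i \<in> {1,2,3}"
    note ii = i nx_in[of i] nx_in[of "nx i"]
    note C = core[of m i "nx i" "nx (nx i)" x y u v "sarea a t" w
       "deriv (alpha a (nx i)) t" "deriv (alpha a (nx (nx i))) t" "totI m a t" "angmom m a t"]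
    have h1: "m i > 0" "m (nx i) > 0" "m (nx (nx i)) > 0" using mpos ii by auto
    have h2: "m i + m (nx i) + m (nx (nx i)) = 1" using cyc_sum[OF i, of m] msum by simp
    have h3: "m i*x i + m (nx i)*x (nx i) + m (nx (nx i))*x (nx (nx i)) = 0"
      "m i*y i + m (nx i)*y (nx i) + m (nx (nx i))*y (nx (nx i)) = 0"
      "m i*u i + m (nx i)*u (nx i) + m (nx (nx i))*u (nx (nx i)) = 0"
      "m i* v i + m (nx i)* v (nx i) + m (nx (nx i))* v (nx (nx i)) = 0"
      using cyc_sum[OF i, of "\<lambda>l. m l * x l"] cyc_sum[OF i, of "\<lambda>l. m l * y l"]
        cyc_sum[OF i, of "\<lambda>l. m l * u l"] cyc_sum[OF i, of "\<lambda>l. m l * v l"] cx cy cu cv by simp_all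
    have h4: "sarea a t = ((x (nx i) - x i)*(y (nx (nx i)) - y i) - (y (nx i) - y i)*(x (nx (nx i)) - x i))/2"
      using cyc_S[OF i, of x y] SA S_def by simp
    have h5: "deriv (alpha a (nx i)) t = w i - w (nx (nx i))" "deriv (alpha a (nx (nx i))) t = w (nx i) - w i"
      using Dalpha[OF nx_in[of i]] Dalpha[OF nx_in[of "nx i"]] nx3[OF i] by simp_all
    have h6: "totI m a t = m i*(x i^2+y i^2) + m (nx i)*(x (nx i)^2+y (nx i)^2) + m (nx (nx i))*(x (nx (nx i))^2+y (nx (nx i))^2)"
      using cyc_sum[OF i, of "\<lambda>l. m l*(x l^2+y l^2)"] TI by simp
    have h7: "angmom m a t = m i*(x i* v i - y i*u i) + m (nx i)*(x (nx i)* v (nx i) - y (nx i)*u (nx i)) + m (nx (nx i))*(x (nx (nx i))* v (nx (nx i)) - y (nx (nx i))*u (nx (nx i)))"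
      using cyc_sum[OF i, of "\<lambda>l. m l*(x l* v l - y l*u l)"] OmI by simp
    have h8: "8 * m 1 * m 2 * m 3 = 8 * m i * m (nx i) * m (nx (nx i))" using cyc_prod[OF i, of m]
      by (simp only: mult.assoc)
    note C' = C[OF h1 h2 h3 rp[OF ii(1)] rp[OF ii(2)] rp[OF ii(3)] h4 _ _ _ _ h5 h6 h7]
    have Sn: "sarea a t \<noteq> 0" using nondeg by simp
    have wl: "w l = (x l * v l - y l * u l)/(x l^2+y l^2)" for l unfolding w_def ..
    note C'' = C'[OF Sn wl wl wl]
    show "let j = nx i; k = nx (nx i); I = totI m a t; \<Omega> = angmom m a t;
          Ii = mI m a i t; Ij = mI m a j t; Ik = mI m a k t;
          dIi = deriv (mI m a i) t; dIj = deriv (mI m a j) t; dIk = deriv (mI m a k) t;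
          Ci = Cc m a i t; Cj = Cc m a j t; Ck = Cc m a k t;
          w0 = (Ik * deriv (alpha a j) t - Ij * deriv (alpha a k) t) / I
      in deriv (phi i) t = w0 + \<Omega> / I
       \<and> w0 = ((Ck * Ik - Cj * Ij) * dIi / Ii - (Ci + 2 * m j * Ik) * dIj
               + (Ci + 2 * m k * Ij) * dIk)
              / (8 * m 1 * m 2 * m 3 * sarea a t * I)"
      unfolding Let_def Cc_def mIt Dphi[OF ii(1)] DmI[OF ii(1)] DmI[OF ii(2)] DmI[OF ii(3)] nx3[OF i] h8
      by (rule conjI[OF C''(1) C''(2)])
  qed
qed

end
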